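(* Let $e_1,e_2\in[0,1)$, $p_1,p_2>0$, and let $K,L,M,N$ be the real numbers defined in the context. For $f_2\in\mathbb{R}$ define \[ \begin{split} \alpha &= p_1(1+e_2\cos f_2)\bigl(K\sin f_2 - M(e_2+\cos f_2)\bigr) + p_2e_1e_2\sin f_2, \\ \beta &= p_1(1+e_2\cos f_2)\bigl(L\sin f_2 - N(e_2+\cos f_2)\bigr), \\ \gamma &= p_2e_2\sin f_2,\\ \kappa &= -p_2e_1(L\cos f_2 + N\sin f_2), \\ \lambda &= p_2e_1(K\cos f_2 + M\sin f_2), \\ \mu &= -p_2(1+e_1^2)(L\cos f_2 + N\sin f_2),\\ \nu &= p_1e_1(1+e_2\cos f_2) + p_2(K\cos f_2 + M\sin f_2), \end{split} \] and let \[ \mathscr{T}(f_2) = \begin{pmatrix} \alpha^2+\beta^2 & 0 & \beta\kappa-\alpha\lambda & 0\\ 2\alpha\gamma & \alpha^2+\beta^2 & \beta\mu-\lambda\gamma-\alpha\nu &\beta\kappa-\alpha\lambda\\ \gamma^2-\beta^2 & 2\alpha\gamma & \beta\kappa-\gamma\nu & \beta\mu-\lambda\gamma-\alpha\nu\\ 0 & \gamma^2-\beta^2 & 0 & \beta\kappa-\gamma\nu \end{pmatrix}. \] Then $\det\mathscr{T}(f_2)$ contains the factor $\beta^2(1+e_2\cos f_2)^2$: there is a trigonometric polynomial $h(f_2)$ (a polynomial in $\cos f_2,\sin f_2$) such that $\det\mathscr{T}(f_2)=(1+e_2\cos f_2)^2\,\beta(f_2)^2\,h(f_2)$ for all $f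_2$.
   Context: Two confocal elliptic orbits are given by Keplerian elements $a_i$, $e_i$, $i_i$, $\Omega_i$, $\omega_i$ ($i=1,2$), with conic parameters $p_i=a_i(1-e_i^2)$ and true anomalies $f_1,f_2$. Define the unit vectors $\mathcal{P}=(\cos\omega_1\cos\Omega_1-\cos i_1\sin\omega_1\sin\Omega_1,\ \cos\omega_1\sin\Omega_1+\cos i_1\sin\omega_1\cos\Omega_1,\ \sin\omega_1\sin i_1)$, $\mathcal{Q}=(-\sin\omega_1\cos\Omega_1-\cos i_1\cos\omega_1\sin\Omega_1,\ -\sin\omega_1\sin\Omega_1+\cos i_1\cos\omega_1\cos\Omega_1,\ \cos\omega_1\sin i_1)$, and $\mathfrak{p},\mathfrak{q}$ by the same formulas with $(i_2,\Omega_2,\omega_2)$ in place of $(i_1,\Omega_1,\omega_1)$. Set $K=\langle\mathcal{P},\mathfrak{p}\rangle$, $L=\langle\mathcal{Q},\mathfrak{p}\rangle$, $M=\langle\mathcal{P},\mathfrak{q}\rangle$, $N=\langle\mathcal{Q},\mathfrak{q}\rangle$. The matrix $\mathscr{T}$ is the Sylvester matrix, with respect to $\cos f_1$, of the polynomials $(\alpha^2+\beta^2)\cos^2 f_1 + 2\alpha\gamma\cos f_1 + \gamma^2-\beta^2$ and $(\beta\kappa - \alpha\lambda)\cos^2 f_1 + (\beta\mu - \lambda\gamma-\alpha\nu)\cos f_1 + \beta\kappa-\gamma\nu$. *)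

theory Defs
  imports "HOL-Analysis.Analysis"
begin

text \<open>Orbital unit vectors P, Q (resp. p, q) of an orbit with inclination i,
  longitude of the ascending node Om and argument of pericentre w.\<close>
definition orbP :: "real \<Rightarrow> real \<Rightarrow> real \<Rightarrow> real^3" where
  "orbP i Om w = vector [cos w * cos Om - cos i * sin w * sin Om,
                         cos w * sin Om + cos i * sin w * cos Om,
                         sin w * sin i]"

definition orbQ :: "real \<Rightarrow> real \<Rightarrow> real \<Rightarrow> real^3" where
  "orbQ i Om w = vector [- sin w * cos Om - cos i * cos w * sin Om,
                         - sin w * sin Om + cos i * cos w * cos Om,
                         cos w * sin i]"

definition trig_poly :: "(real \<Rightarrow> real) \<Rightarrow> bool" where
  "trig_poly h \<longleftrightarrow> (\<exists>n (c :: nat \<Rightarrow> nat \<Rightarrow> real).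
       \<forall>x. h x = (\<Sum>i<n. \<Sum>j<n. c i j * cos x ^ i * sin x ^ j))"

definition c_alpha :: "real \<Rightarrow> real \<Rightarrow> real \<Rightarrow> real \<Rightarrow> real \<Rightarrow> real \<Rightarrow> real \<Rightarrow> real \<Rightarrow> real \<Rightarrow> real" where
  "c_alpha K L M N e1 e2 p1 p2 f2 =
     p1 * (1 + e2 * cos f2) * (K * sin f2 - M * (e2 + cos f2)) + p2 * e1 * e2 * sin f2"

definition c_beta :: "real \<Rightarrow> real \<Rightarrow> real \<Rightarrow> real \<Rightarrow> real \<Rightarrow> real \<Rightarrow> real \<Rightarrow> real \<Rightarrow> real \<Rightarrow> real" where
  "c_beta K L M N e1 e2 p1 p2 f2 = p1 * (1 + e2 * cos f2) * (L * sin f2 - N * (e2 + cos f2))"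

definition c_gamma :: "real \<Rightarrow> real \<Rightarrow> real \<Rightarrow> real \<Rightarrow> real \<Rightarrow> real \<Rightarrow> real \<Rightarrow> real \<Rightarrow> real \<Rightarrow> real" where
  "c_gamma K L M N e1 e2 p1 p2 f2 = p2 * e2 * sin f2"

definition c_kappa :: "real \<Rightarrow> real \<Rightarrow> real \<Rightarrow> real \<Rightarrow> real \<Rightarrow> real \<Rightarrow> real \<Rightarrow> real \<Rightarrow> real \<Rightarrow> real" where
  "c_kappa K L M N e1 e2 p1 p2 f2 = - p2 * e1 * (L * cos f2 + N * sin f2)"

definition c_lambda :: "real \<Rightarrow> real \<Rightarrow> real \<Rightarrow> real \<Rightarrow> real \<Rightarrow> real \<Rightarrow> real \<Rightarrow> real \<Rightarrow> real \<Rightarrow> real" where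
  "c_lambda K L M N e1 e2 p1 p2 f2 = p2 * e1 * (K * cos f2 + M * sin f2)"

definition c_mu :: "real \<Rightarrow> real \<Rightarrow> real \<Rightarrow> real \<Rightarrow> real \<Rightarrow> real \<Rightarrow> real \<Rightarrow> real \<Rightarrow> real \<Rightarrow> real" where
  "c_mu K L M N e1 e2 p1 p2 f2 = - p2 * (1 + e1^2) * (L * cos f2 + N * sin f2)"

definition c_nu :: "real \<Rightarrow> real \<Rightarrow> real \<Rightarrow> real \<Rightarrow> real \<Rightarrow> real \<Rightarrow> real \<Rightarrow> real \<Rightarrow> real \<Rightarrow> real" where
  "c_nu K L M N e1 e2 p1 p2 f2 = p1 * e1 * (1 + e2 * cos f2) + p2 * (K * cos f2 + M * sin f2)"

definition T_mat :: "real \<Rightarrow> real \<Rightarrow> real \<Rightarrow> real \<Rightarrow> real \<Rightarrow> real \<Rightarrow> real \<Rightarrow> real \<Rightarrow> real \<Rightarrow> real^4^4" where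
  "T_mat K L M N e1 e2 p1 p2 f2 =
    (let a = c_alpha K L M N e1 e2 p1 p2 f2; b = c_beta K L M N e1 e2 p1 p2 f2;
         g = c_gamma K L M N e1 e2 p1 p2 f2; k = c_kappa K L M N e1 e2 p1 p2 f2;
         l = c_lambda K L M N e1 e2 p1 p2 f2; m = c_mu K L M N e1 e2 p1 p2 f2;
         n = c_nu K L M N e1 e2 p1 p2 f2
     in vector [
       vector [a^2 + b^2, 0, b*k - a*l, 0],
       vector [2*a*g, a^2 + b^2, b*m - l*g - a*n, b*k - a*l],
       vector [g^2 - b^2, 2*a*g, b*k - g*n, b*m - l*g - a*n],
       vector [0, g^2 - b^2, 0, b*k - g*n]])"

end

theory Submission
  imports Defs
begin

lemma det_4:
  "det (A::'a::comm_ring_1^4^4) = A$1$1 * A$2$2 * A$3$3 * A$4$4 - A$1$1 * A$2$2 * A$3$4 * A$4$3 - A$1$1 * A$2$3 * A$3$2 * A$4$4 + A$1$1 * A$2$3 * A$3$4 * A$4$2 + A$1$1 * A$2$4 * A$3$2 * A$4$3 - A$1$1 * A$2$4 * A$3$3 * A$4$2 - A$1$2 * A$2$1 * A$3$3 * A$4$4 + A$1$2 * A$2$1 * A$3$4 * A$4$3 + A$1$2 * A$2$3 * A$3$1 * A$4$4 - A$1$2 * A$2$3 * A$3$4 * A$4$1 - A$1$2 * A$2$4 * A$3$1 * A$4$3 + A$1$2 * A$2$4 * A$3$3 * A$4$1 + A$1$3 * A$2$1 * A$3$2 * A$4$4 - A$1$3 * A$2$1 * A$3$4 * A$4$2 -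 A$1$3 * A$2$2 * A$3$1 * A$4$4 + A$1$3 * A$2$2 * A$3$4 * A$4$1 + A$1$3 * A$2$4 * A$3$1 * A$4$2 - A$1$3 * A$2$4 * A$3$2 * A$4$1 - A$1$4 * A$2$1 * A$3$2 * A$4$3 + A$1$4 * A$2$1 * A$3$3 * A$4$2 + A$1$4 * A$2$2 * A$3$1 * A$4$3 - A$1$4 * A$2$2 * A$3$3 * A$4$1 - A$1$4 * A$2$3 * A$3$1 * A$4$2 + A$1$4 * A$2$3 * A$3$2 * A$4$1"
proof -
  have f1: "finite {2::4, 3, 4}" "1 \<notin> {2::4, 3, 4}" by auto
  have f2: "finite {3::4, 4}" "2 \<notin> {3::4, 4}" by auto
  have f3: "finite {4::4}" "3 \<notin> {4::4}" by auto
  show ?thesis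
    unfolding det_def UNIV_4
    unfolding sum_over_permutations_insert[OF f1]
    unfolding sum_over_permutations_insert[OF f2]
    unfolding sum_over_permutations_insert[OF f3]
    unfolding permutes_sing
    by (simp add: sign_swap_id permutation_swap_id permutation_compose sign_compose sign_id swap_id_eq algebra_simps)
qed

lemma vector_4:
 "(vector [x,y,z,u] ::('a::zero)^4)$1 = x"
 "(vector [x,y,z,u] ::('a::zero)^4)$2 = y"
 "(vector [x,y,z,u] ::('a::zero)^4)$3 = z"
 "(vector [x,y,z,u] ::('a::zero)^4)$4 = u"
  unfolding vector_def by simp_all

definition resf :: "real \<Rightarrow> real \<Rightarrow> real \<Rightarrow> real \<Rightarrow> real \<Rightarrow> real \<Rightarrow> real \<Rightarrow> real" where
  "resf a b g k l m n = ((a^2+b^2)*(b*k-g*n) - (g^2-b^2)*(b*k-a*l))^2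
     - ((a^2+b^2)*(b*m-l*g-a*n) - (2*a*g)*(b*k-a*l)) * ((2*a*g)*(b*k-g*n) - (g^2-b^2)*(b*m-l*g-a*n))"

lemma det_vec:
  fixes a b g k l m n :: real
  shows "det (vector [
       vector [a^2 + b^2, 0, b*k - a*l, 0],
       vector [2*a*g, a^2 + b^2, b*m - l*g - a*n, b*k - a*l],
       vector [g^2 - b^2, 2*a*g, b*k - g*n, b*m - l*g - a*n],
       vector [0, g^2 - b^2, 0, b*k - g*n]] :: real^4^4) = resf a b g k l m n"
  unfolding det_4 vector_4 resf_def by algebra

definition Qf :: "real \<Rightarrow> real \<Rightarrow> real \<Rightarrow> real \<Rightarrow> real \<Rightarrow> real \<Rightarrow> real \<Rightarrow> real" where
  "Qf a b g k l m n = g^4 * l^2 + g^4 * k^2 - 2 * b * g^3 * l * m + 2 * b * g^3 * k * n + b^2 * g^2 * n^2 + b^2 * g^2 * m^2 - b^2 * g^2 * l^2 - 4 * b^2 * g^2 * k^2 + 2 * b^3 * g * l * m - 4 * b^3 * g * k * n - b^4 * m^2 + 4 * b^4 * k^2 - 2 * a * g^3 * l * n - 2 * a * g^3 * k * m + 6 * a * b * g^2 * k * l + 2 * a * b^3 * m * n - 4 * a * b^3 * k * l + a^2 * g^2 * n^2 + a^2 * g^2 * m^2 - a^2 * g^2 * l^2 + 2 * a^2 * g^2 * k^2 - 6 * a^2 * b * g * k * n - a^2 * b^2 * n^2 - a^2 * b^2 * m^2 + a^2 * b^2 * l^2 + 4 * a^2 * b^2 * k^2 + 2 * a^3 * g *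 l * n - 2 * a^3 * g * k * m + 2 * a^3 * b * m * n - 2 * a^3 * b * k * l - a^4 * n^2 + a^4 * k^2"
definition Hf :: "real \<Rightarrow> real \<Rightarrow> real \<Rightarrow> real \<Rightarrow> real \<Rightarrow> real \<Rightarrow> real \<Rightarrow> real \<Rightarrow> real" where
  "Hf g n0 k0 A1 B1 w p1 e1 = 0 - A1^2 * B1^2 * w^4 * p1^6 * e1^2 - A1^4 * w^4 * p1^6 * e1^2 + 2 * k0 * A1 * B1^3 * w^3 * p1^5 * e1 + 2 * k0 * A1 * B1^3 * w^3 * p1^5 * e1^3 + 2 * k0 * A1^3 * B1 * w^3 * p1^5 * e1 + 2 * k0 * A1^3 * B1 * w^3 * p1^5 * e1^3 - k0^2 * B1^4 * w^2 * p1^4 + 2 * k0^2 * B1^4 * w^2 * p1^4 * e1^2 - k0^2 * B1^4 * w^2 * p1^4 * e1^4 - k0^2 * A1^2 * B1^2 * w^2 * p1^4 + 2 * k0^2 * A1^2 * B1^2 * w^2 * p1^4 * e1^2 - k0^2 * A1^2 * B1^2 * w^2 * p1^4 * e1^4 + k0^2 * A1^4 * w^2 * p1^4 * e1^2 - 2 * n0 * A1^2 * B1^2 * w^3 * p1^5 * e1 - 2 * n0 * A1^4 * w^3 * p1^5 * e1 + 2 * n0 * k0 * A1 * B1^3 * w^2 * p1^4 - 2 * n0 * k0 * A1 * B1^3 * w^2 * p1^4 * e1^2 + 2 * n0 * k0 * A1^3 * B1 * w^2 * p1^4 - n0^2 * A1^2 * B1^2 * w^2 * p1^4 + n0^2 *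 A1^2 * B1^2 * w^2 * p1^4 * e1^2 - n0^2 * A1^4 * w^2 * p1^4 - 2 * g * A1 * B1^2 * w^3 * p1^5 * e1^3 - 4 * g * A1^3 * w^3 * p1^5 * e1^3 - 2 * g * k0 * B1^3 * w^2 * p1^4 * e1^2 + 2 * g * k0 * B1^3 * w^2 * p1^4 * e1^4 + 6 * g * k0 * A1^2 * B1 * w^2 * p1^4 * e1^4 - 2 * g * k0^2 * A1 * B1^2 * w * p1^3 * e1 + 4 * g * k0^2 * A1 * B1^2 * w * p1^3 * e1^3 - 2 * g * k0^2 * A1 * B1^2 * w * p1^3 * e1^5 - 2 * g * k0^2 * A1^3 * w * p1^3 * e1 + 2 * g * k0^2 * A1^3 * w * p1^3 * e1^3 - 4 * g * n0 * A1 * B1^2 * w^2 * p1^4 * e1^2 - 6 * g * n0 * A1^3 * w^2 * p1^4 * e1^2 - 2 * g * n0^2 * A1 * B1^2 * w * p1^3 * e1 + 2 * g * n0^2 * A1 * B1^2 * w * p1^3 * e1^3 - 2 * g * n0^2 * A1^3 * w * p1^3 * e1 + g^2 * B1^2 * w^2 * p1^4 * e1^2 - g^2 * B1^2 * w^2 * p1^4 * e1^4 + g^2 * A1^2 * w^2 * p1^4 * e1^2 - 6 * g^2 * A1^2 * w^2 * p1^4 * e1^4 - 6 * g^2 * k0 * A1 * B1 * w * p1^3 * e1^3 + 6 * g^2 * k0 * A1 * B1 * w * p1^3 * e1^5 + g^2 * k0^2 * B1^2 * p1^2 - 3 * g^2 * k0^2 * B1^2 * p1^2 * e1^2 + 3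 * g^2 * k0^2 * B1^2 * p1^2 * e1^4 - g^2 * k0^2 * B1^2 * p1^2 * e1^6 + g^2 * k0^2 * A1^2 * p1^2 - 2 * g^2 * k0^2 * A1^2 * p1^2 * e1^2 + g^2 * k0^2 * A1^2 * p1^2 * e1^4 + 2 * g^2 * n0 * B1^2 * w * p1^3 * e1 - 2 * g^2 * n0 * B1^2 * w * p1^3 * e1^3 + 2 * g^2 * n0 * A1^2 * w * p1^3 * e1 - 6 * g^2 * n0 * A1^2 * w * p1^3 * e1^3 + g^2 * n0^2 * B1^2 * p1^2 - 2 * g^2 * n0^2 * B1^2 * p1^2 * e1^2 + g^2 * n0^2 * B1^2 * p1^2 * e1^4 + g^2 * n0^2 * A1^2 * p1^2 - g^2 * n0^2 * A1^2 * p1^2 * e1^2 + 2 * g^3 * A1 * w * p1^3 * e1^3 - 4 * g^3 * A1 * w * p1^3 * e1^5 + 2 * g^3 * k0 * B1 * p1^2 * e1^2 - 4 * g^3 * k0 * B1 * p1^2 * e1^4 + 2 * g^3 * k0 * B1 * p1^2 * e1^6 + 2 * g^3 * n0 * A1 * p1^2 * e1^2 - 2 * g^3 * n0 * A1 * p1^2 * e1^4 + g^4 * p1^2 * e1^4 - g^4 * p1^2 * e1^6"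
lemma res_Q:
  fixes a b g k l m n :: real
  shows "((a^2+b^2)*(b*k-g*n) - (g^2-b^2)*(b*k-a*l))^2
     - ((a^2+b^2)*(b*m-l*g-a*n) - (2*a*g)*(b*k-a*l)) * ((2*a*g)*(b*k-g*n) - (g^2-b^2)*(b*m-l*g-a*n))
     = b^2 * Qf a b g k l m n"
  unfolding Qf_def by algebra
lemma Q_H:
  fixes g n0 k0 A1 B1 w p1 e1 :: real
  shows "Qf (e1*g + p1*w*A1) (p1*w*B1) g (e1*k0) (e1*n0) ((1+e1^2)*k0) (n0 + p1*e1*w)
     = w^2 * Hf g n0 k0 A1 B1 w p1 e1"
  unfolding Qf_def Hf_def by algebra

lemma B: "(\<Sum>b<(n::nat). (if b = j then c else 0) * (Y b::real)) = (if j < n then c * Y j else 0)"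
proof -
  have "(\<Sum>b<n. (if b = j then c else 0) * Y b) = (\<Sum>b<n. if b = j then c * Y b else 0)"
    by (rule sum.cong) auto
  also have "\<dots> = (if j < n then c * Y j else 0)"
    by (simp only: sum.delta[OF finite_lessThan] lessThan_iff)
  finally show ?thesis .
qed
lemma A: "(\<Sum>a<(n::nat). \<Sum>b<n. (if a = i \<and> b = j then c else 0) * (X a b::real)) = (if i < n \<and> j < n then c * X i j else 0)"
proof -
  have "(\<Sum>a<(n::nat). \<Sum>b<n. (if a = i \<and> b = j then c else 0) * (X a b::real)) = (\<Sum>a<(n::nat). (if a = i then 1 else 0) * (\<Sum>b<n. (if b = j then c else 0) * X a b))"
    by (intro sum.cong refl) (auto simp: sum_distrib_left intro!: sum.cong)
  also have "\<dots> = (if i < n \<and> j < n then c * X i j else 0)"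
    by (simp add: B)
  finally show ?thesis .
qed

lemma tp_mono: "trig_poly (\<lambda>x. c * cos x ^ i * sin x ^ j)"
proof -
  define N where "N = Suc (max i j)"
  have iN: "i < N" "j < N" by (auto simp: N_def)
  have H: "\<forall>x. c * cos x ^ i * sin x ^ j = (\<Sum>a<N. \<Sum>b<N. (if a = i \<and> b = j then c else 0) * cos x ^ a * sin x ^ b)"
  proof
    fix x
    show "c * cos x ^ i * sin x ^ j = (\<Sum>a<N. \<Sum>b<N. (if a = i \<and> b = j then c else 0) * cos x ^ a * sin x ^ b)"
      using A[where n=N and i=i and j=j and c=c and X="\<lambda>a b. cos x ^ a * sin x ^ b"] iN by (simp add: mult.assoc)
  qed
  show ?thesis unfolding trig_poly_def
    apply (rule exI[where x=N])
    apply (rule exI[where x="\<lambda>a b. if a = i \<and> b = j then c else 0"])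
    by (rule H)
qed

lemma pad:
  assumes "n1 \<le> (n::nat)"
  shows "(\<Sum>i<n. \<Sum>j<n. (if i < n1 \<and> j < n1 then c i j else 0) * X i j) = (\<Sum>i<n1. \<Sum>j<n1. c i j * (X i j::real))"
proof -
  have "(\<Sum>i<n. \<Sum>j<n. (if i < n1 \<and> j < n1 then c i j else 0) * X i j)
     = (\<Sum>i<n. if i < n1 then (\<Sum>j<n. if j < n1 then c i j * X i j else 0) else 0)"
    by (auto intro!: sum.cong)
  also have "\<dots> = (\<Sum>i<n. if i < n1 then (\<Sum>j<n1. c i j * X i j) else 0)"
    using assms by (intro sum.cong refl) (auto simp: sum.If_cases lessThan_def intro!: sum.cong)
  also have "\<dots> = (\<Sum>i<n1. \<Sum>j<n1. c i j * X i j)"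
    using assms by (simp add: sum.If_cases) (intro sum.cong, auto)
  finally show ?thesis .
qed

lemma tp_add:
  assumes "trig_poly f" "trig_poly g"
  shows "trig_poly (\<lambda>x. f x + g x)"
proof -
  from assms obtain n1 c1 n2 c2 where
    f: "\<And>x. f x = (\<Sum>i<n1. \<Sum>j<n1. c1 i j * cos x ^ i * sin x ^ j)" and
    g: "\<And>x. g x = (\<Sum>i<n2. \<Sum>j<n2. c2 i j * cos x ^ i * sin x ^ j)"
    unfolding trig_poly_def by blast
  let ?n = "n1 + n2"
  let ?c = "\<lambda>i j. (if i < n1 \<and> j < n1 then c1 i j else 0) + (if i < n2 \<and> j < n2 then c2 i j else 0)"
  show ?thesis unfolding trig_poly_def
  proof (intro exI allI)
    fix x
    have "(\<Sum>i<?n. \<Sum>j<?n. ?c i j * cos x ^ i * sin x ^ j)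
       = (\<Sum>i<?n. \<Sum>j<?n. (if i < n1 \<and> j < n1 then c1 i j else 0) * (cos x ^ i * sin x ^ j))
       + (\<Sum>i<?n. \<Sum>j<?n. (if i < n2 \<and> j < n2 then c2 i j else 0) * (cos x ^ i * sin x ^ j))"
      by (simp add: algebra_simps sum.distrib)
    also have "\<dots> = f x + g x"
      by (simp add: pad f g mult.assoc)
    finally show "f x + g x = (\<Sum>i<?n. \<Sum>j<?n. ?c i j * cos x ^ i * sin x ^ j)" by simp
  qed
qed

lemma tp_const: "trig_poly (\<lambda>x. c)"
  using tp_mono[of c 0 0] by simp

lemma tp_sum:
  assumes "finite S" "\<And>s. s \<in> S \<Longrightarrow> trig_poly (f s)"
  shows "trig_poly (\<lambda>x. \<Sum>s\<in>S. f s x)"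
  using assms
proof (induction S rule: finite_induct)
  case empty then show ?case using tp_const[of 0] by simp
next
  case (insert a F)
  then show ?case using tp_add[of "f a" "\<lambda>x. \<Sum>s\<in>F. f s x"] by simp
qed

lemma tp_mult:
  assumes "trig_poly f" "trig_poly g"
  shows "trig_poly (\<lambda>x. f x * g x)"
proof -
  from assms obtain n1 c1 n2 c2 where
    f: "\<And>x. f x = (\<Sum>i<n1. \<Sum>j<n1. c1 i j * cos x ^ i * sin x ^ j)" and
    g: "\<And>x. g x = (\<Sum>i<n2. \<Sum>j<n2. c2 i j * cos x ^ i * sin x ^ j)"
    unfolding trig_poly_def by blast
  have eq: "f x * g x = (\<Sum>i<n1. \<Sum>k<n2. \<Sum>j<n1. \<Sum>l<n2. (c1 i j * c2 k l) * cos x ^ (i+k) * sin x ^ (j+l))" for x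
    unfolding f g sum_product
    by (intro sum.cong refl) (simp add: power_add algebra_simps)
  have "trig_poly (\<lambda>x. \<Sum>i<n1. \<Sum>k<n2. \<Sum>j<n1. \<Sum>l<n2. (c1 i j * c2 k l) * cos x ^ (i+k) * sin x ^ (j+l))"
    by (intro tp_sum tp_mono finite_lessThan)
  then show ?thesis unfolding eq .
qed

lemma tp_cos: "trig_poly cos"
  using tp_mono[of 1 1 0] by simp
lemma tp_sin: "trig_poly sin"
  using tp_mono[of 1 0 1] by simp

lemma tp_cos': "trig_poly (\<lambda>x. cos x)" using tp_cos by simp
lemma tp_sin': "trig_poly (\<lambda>x. sin x)" using tp_sin by simp

lemma tp_diff:
  assumes "trig_poly f" "trig_poly g"
  shows "trig_poly (\<lambda>x. f x - g x)"
proof -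
  have "trig_poly (\<lambda>x. f x + (-1) * g x)"
    by (intro tp_add tp_mult assms tp_const)
  then show ?thesis by simp
qed

lemma tp_uminus:
  assumes "trig_poly f"
  shows "trig_poly (\<lambda>x. - f x)"
proof -
  have "trig_poly (\<lambda>x. (-1) * f x)"
    by (intro tp_mult assms tp_const)
  then show ?thesis by simp
qed

lemma tp_power:
  assumes "trig_poly f"
  shows "trig_poly (\<lambda>x. f x ^ n)"
proof (induction n)
  case 0 then show ?case using tp_const[of 1] by simp
next
  case (Suc n) then show ?case using tp_mult[OF assms Suc] by simp
qed

lemmas tp_intros = tp_add tp_diff tp_mult tp_uminus tp_power tp_cos' tp_sin' tp_const


lemma main_gen:
  fixes K L M N e1 e2 p1 p2 :: real
  shows "\<exists>h. trig_poly h \<and>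
              (\<forall>f2. det (T_mat K L M N e1 e2 p1 p2 f2) =
                     (1 + e2 * cos f2)^2 * (c_beta K L M N e1 e2 p1 p2 f2)^2 * h f2)"
proof -
  define h where "h = (\<lambda>x. Hf (p2*e2* sin x) (p2*(K*cos x + M* sin x)) (-p2*(L*cos x+N* sin x))
      (K* sin x - M*(e2+cos x)) (L* sin x - N*(e2+cos x)) (1+e2*cos x) p1 e1)"
  have "trig_poly h" unfolding h_def Hf_def by (intro tp_intros)
  moreover have "det (T_mat K L M N e1 e2 p1 p2 f2) =
                     (1 + e2 * cos f2)^2 * (c_beta K L M N e1 e2 p1 p2 f2)^2 * h f2" for f2
  proof -
    define g n0 k0 A1 B1 w where "g = p2*e2* sin f2" and "n0 = p2*(K*cos f2 + M* sin f2)"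
      and "k0 = -p2*(L*cos f2+N* sin f2)" and "A1 = K* sin f2 - M*(e2+cos f2)"
      and "B1 = L* sin f2 - N*(e2+cos f2)" and "w = 1+e2*cos f2"
    have ea: "c_alpha K L M N e1 e2 p1 p2 f2 = e1*g + p1*w*A1"
      unfolding c_alpha_def g_def w_def A1_def by (simp add: algebra_simps)
    have eb: "c_beta K L M N e1 e2 p1 p2 f2 = p1*w*B1"
      unfolding c_beta_def w_def B1_def by (simp add: algebra_simps)
    have eg: "c_gamma K L M N e1 e2 p1 p2 f2 = g"
      unfolding c_gamma_def g_def by (simp add: algebra_simps)
    have ek: "c_kappa K L M N e1 e2 p1 p2 f2 = e1*k0"
      unfolding c_kappa_def k0_def by (simp add: algebra_simps)
    have el: "c_lambda K L M N e1 e2 p1 p2 f2 = e1*n0"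
      unfolding c_lambda_def n0_def by (simp add: algebra_simps)
    have em: "c_mu K L M N e1 e2 p1 p2 f2 = (1+e1^2)*k0"
      unfolding c_mu_def k0_def by (simp add: algebra_simps)
    have en: "c_nu K L M N e1 e2 p1 p2 f2 = n0 + p1*e1*w"
      unfolding c_nu_def n0_def w_def by (simp add: algebra_simps)
    have hf: "h f2 = Hf g n0 k0 A1 B1 w p1 e1"
      unfolding h_def g_def n0_def k0_def A1_def B1_def w_def by simp
    have "det (T_mat K L M N e1 e2 p1 p2 f2) = resf (c_alpha K L M N e1 e2 p1 p2 f2) (c_beta K L M N e1 e2 p1 p2 f2)
        (c_gamma K L M N e1 e2 p1 p2 f2) (c_kappa K L M N e1 e2 p1 p2 f2) (c_lambda K L M N e1 e2 p1 p2 f2)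
        (c_mu K L M N e1 e2 p1 p2 f2) (c_nu K L M N e1 e2 p1 p2 f2)"
      unfolding T_mat_def Let_def by (rule det_vec)
    also have "\<dots> = (p1*w*B1)^2 * Qf (e1*g + p1*w*A1) (p1*w*B1) g (e1*k0) (e1*n0) ((1+e1^2)*k0) (n0 + p1*e1*w)"
      unfolding ea eb eg ek el em en resf_def by (rule res_Q)
    also have "\<dots> = (p1*w*B1)^2 * (w^2 * Hf g n0 k0 A1 B1 w p1 e1)"
      by (simp only: Q_H)
    also have "\<dots> = (1 + e2 * cos f2)^2 * (c_beta K L M N e1 e2 p1 p2 f2)^2 * h f2"
      unfolding hf eb w_def by (simp add: algebra_simps)
    finally show ?thesis .
  qed
  ultimately show ?thesis by blast
qed

theorem mainTheorem2:
  fixes e1 e2 p1 p2 i1 Om1 w1 i2 Om2 w2 :: real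
  assumes "0 \<le> e1" "e1 < 1" "0 \<le> e2" "e2 < 1" "0 < p1" "0 < p2"
  shows "let K = orbP i1 Om1 w1 \<bullet> orbP i2 Om2 w2;
             L = orbQ i1 Om1 w1 \<bullet> orbP i2 Om2 w2;
             M = orbP i1 Om1 w1 \<bullet> orbQ i2 Om2 w2;
             N = orbQ i1 Om1 w1 \<bullet> orbQ i2 Om2 w2
         in \<exists>h. trig_poly h \<and>
              (\<forall>f2. det (T_mat K L M N e1 e2 p1 p2 f2) =
                     (1 + e2 * cos f2)^2 * (c_beta K L M N e1 e2 p1 p2 f2)^2 * h f2)"
    unfolding Let_def by (rule main_gen)

end
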